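(* Consider the uniform Qs predictor with queue capacity $a:=\mathrm{qcap}$, an integer $a\ge2$, processing an arbitrary sequence of items. For items $i$ whose queue has exactly $a$ cells, the estimate is $Q(i)=(a-1)/Y_i$ with $Y_i:=\sum_{0\le j<|q(i)|}c_j-1$, and $Q(i)=0$ for all other items. Then at every time $t\ge1$ and for every integer $k>1$, $N(Q^{(t)},1/k)\le k-1$, where $N(Q,p):=|\{i:Q(i)>p\}|$.
   Context: The Qs predictor keeps a map from items to queues of positive integer counts ("cells"), the newest cell being $c_0$, older ones $c_1,c_2,\dots$; each queue holds at most $\mathrm{qcap}$ cells. At each time $t$ it outputs estimates $Q^{(t)}$, then observes $o^{(t)}$ and updates: if $o^{(t)}$ has no queue, an empty queue is created; the queue of $o^{(t)}$ gets a positive update (its size grows by one if below capacity; all existing cells shift one position older, the oldest being discarded if at capacity; a new cell $c_0=1$ is created), and every other existing queue gets a negative update ($c_0$ incremented by $1$). Items may occasionally be removed from the map (pruning). The "uniform" variant outputs a positive estimate for an item only once its queue has reached capacity $\mathrm{qcap}$. *)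

theory Defs
  imports Complex_Main
begin

text \<open>State of the Qs predictor: a partial map from items to queues of cells.
  A queue is a list, newest cell c_0 first.\<close>
type_synonym 'a qs_state = "'a \<Rightarrow> nat list option"

definition qs_init :: "'a qs_state" where
  "qs_init = (\<lambda>_. None)"

definition pos_update :: "nat \<Rightarrow> nat list \<Rightarrow> nat list" where
  "pos_update qcap q = 1 # (if length q < qcap then q else butlast q)"

fun neg_update :: "nat list \<Rightarrow> nat list" where
  "neg_update [] = []"
| "neg_update (c # cs) = Suc c # cs"

definition qs_update :: "nat \<Rightarrow> 'a \<Rightarrow> 'a qs_state \<Rightarrow> 'a qs_state" where
  "qs_update qcap ob S = (\<lambda>x.
     if x = ob then Some (pos_update qcap (case S ob of None \<Rightarrow> [] | Some q \<Rightarrow> q))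
     else map_option neg_update (S x))"

definition qs_prune :: "'a set \<Rightarrow> 'a qs_state \<Rightarrow> 'a qs_state" where
  "qs_prune P S = (\<lambda>x. if x \<in> P then None else S x)"

fun qs_state :: "nat \<Rightarrow> (nat \<Rightarrow> 'a) \<Rightarrow> (nat \<Rightarrow> 'a set) \<Rightarrow> nat \<Rightarrow> 'a qs_state" where
  "qs_state qcap obs prn 0 = qs_init"
| "qs_state qcap obs prn (Suc n) =
     qs_prune (prn (Suc n)) (qs_update qcap (obs (Suc n)) (qs_state qcap obs prn n))"

definition uniform_estimate :: "nat \<Rightarrow> 'a qs_state \<Rightarrow> 'a \<Rightarrow> real" where
  "uniform_estimate qcap S i = (case S i of
      None \<Rightarrow> 0
    | Some q \<Rightarrow> if length q = qcap
                then (real qcap - 1) / (real (sum_list q) - 1) else 0)"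

text \<open>Estimate output at time t (t \<ge> 1), before observing obs t.\<close>
definition Q_at :: "nat \<Rightarrow> (nat \<Rightarrow> 'a) \<Rightarrow> (nat \<Rightarrow> 'a set) \<Rightarrow> nat \<Rightarrow> 'a \<Rightarrow> real" where
  "Q_at qcap obs prn t = uniform_estimate qcap (qs_state qcap obs prn (t - 1))"

definition N_count :: "('a \<Rightarrow> real) \<Rightarrow> real \<Rightarrow> nat" where
  "N_count Q p = card {i. Q i > p}"

end

theory Submission
  imports Defs
begin

definition qinv :: "(nat \<Rightarrow> 'a) \<Rightarrow> nat \<Rightarrow> 'a qs_state \<Rightarrow> bool" where
  "qinv obs n S \<longleftrightarrow> (\<forall>x q. S x = Some q \<longrightarrow> (\<forall>c\<in>set q. 1 \<le> c) \<and> sum_list q \<le> n \<and>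
     (\<forall>j<length q. obs (n + 1 - sum_list (take (Suc j) q)) = x))"

lemma sum_take_le: "sum_list (take m (q::nat list)) \<le> sum_list q"
  by (metis append_take_drop_id le_add1 sum_list_append)

lemma pos_ok:
  assumes "\<forall>c\<in>set q0. 1 \<le> (c::nat)" "sum_list q0 \<le> n"
    "\<forall>j<length q0. obs (n+1 - sum_list (take (Suc j) q0)) = x" "obs (Suc n) = x"
  shows "(\<forall>c\<in>set (pos_update a q0). 1 \<le> c) \<and> sum_list (pos_update a q0) \<le> Suc n \<and>
     (\<forall>j<length (pos_update a q0). obs (Suc n + 1 - sum_list (take (Suc j) (pos_update a q0))) = x)"
proof -
  define r where "r = (if length q0 < a then q0 else butlast q0)"
  define l where "l = length r"
  have rl: "r = take l q0" "l \<le> length q0"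
    unfolding r_def l_def by (auto simp: butlast_conv_take)
  have pu: "pos_update a q0 = 1 # r" unfolding pos_update_def r_def by simp
  have s1: "\<forall>c\<in>set r. 1 \<le> c" using assms(1) unfolding rl(1) by (meson in_set_takeD)
  have s2: "sum_list r \<le> n" using assms(2) sum_take_le[of l q0] unfolding rl(1) by linarith
  have s3: "obs (Suc n + 1 - sum_list (take (Suc j) (1 # r))) = x" if "j < Suc (length r)" for j
  proof (cases j)
    case 0 then show ?thesis using assms(4) by simp
  next
    case (Suc j')
    have jl: "Suc j' \<le> l" using that Suc l_def by simp
    then have tk: "take (Suc j') r = take (Suc j') q0" unfolding rl(1) by (simp add: min_def)
    have "obs (Suc n + 1 - sum_list (take (Suc j) (1 # r))) = obs (n+1 - sum_list (take (Suc j') q0))"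
      using Suc tk by simp
    also have "\<dots> = x" using assms(3) jl rl(2) by simp
    finally show ?thesis .
  qed
  show ?thesis unfolding pu using s1 s2 s3 by auto
qed

lemma neg_ok:
  assumes "\<forall>c\<in>set q0. 1 \<le> (c::nat)" "sum_list q0 \<le> n"
    "\<forall>j<length q0. obs (n+1 - sum_list (take (Suc j) q0)) = x"
  shows "(\<forall>c\<in>set (neg_update q0). 1 \<le> c) \<and> sum_list (neg_update q0) \<le> Suc n \<and>
     (\<forall>j<length (neg_update q0). obs (Suc n + 1 - sum_list (take (Suc j) (neg_update q0))) = x)"
proof (cases q0)
  case Nil then show ?thesis by simp
next
  case (Cons c cs)
  show ?thesis
  proof (intro conjI allI impI)
    show "\<forall>c\<in>set (neg_update q0). 1 \<le> c" using assms(1) Cons by auto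
    show "sum_list (neg_update q0) \<le> Suc n" using assms(2) Cons by auto
    fix j assume j: "j < length (neg_update q0)"
    have "Suc n + 1 - sum_list (take (Suc j) (neg_update q0)) = n + 1 - sum_list (take (Suc j) q0)"
      using Cons by simp
    then show "obs (Suc n + 1 - sum_list (take (Suc j) (neg_update q0))) = x"
      using assms(3) j Cons by auto
  qed
qed

lemma inv_state: "qinv obs n (qs_state a obs prn n)"
proof (induction n)
  case 0 then show ?case by (simp add: qinv_def qs_init_def)
next
  case (Suc n)
  let ?S = "qs_state a obs prn n"
  show ?case unfolding qinv_def
  proof (intro allI impI)
    fix x q assume h: "qs_state a obs prn (Suc n) x = Some q"
    then have np: "x \<notin> prn (Suc n)" by (simp add: qs_prune_def split: if_splits)
    show "(\<forall>c\<in>set q. 1 \<le> c) \<and> sum_list q \<le> Suc n \<and>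
       (\<forall>j<length q. obs (Suc n + 1 - sum_list (take (Suc j) q)) = x)"
    proof (cases "x = obs (Suc n)")
      case True
      define q0 where "q0 = (case ?S (obs (Suc n)) of None \<Rightarrow> [] | Some q \<Rightarrow> q)"
      have q: "q = pos_update a q0" using h np True
        by (simp add: qs_prune_def qs_update_def q0_def)
      have "(\<forall>c\<in>set q0. 1 \<le> c) \<and> sum_list q0 \<le> n \<and>
         (\<forall>j<length q0. obs (n+1 - sum_list (take (Suc j) q0)) = x)"
      proof (cases "?S (obs (Suc n))")
        case None then show ?thesis by (simp add: q0_def)
      next
        case (Some q1)
        then have "q0 = q1" by (simp add: q0_def)
        moreover have "?S x = Some q1" using Some True by simp
        ultimately show ?thesis using Suc.IH unfolding qinv_def by blast
      qed
      then have c1: "\<forall>c\<in>set q0. 1 \<le> c" and c2: "sum_list q0 \<le> n"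
        and c3: "\<forall>j<length q0. obs (n+1 - sum_list (take (Suc j) q0)) = x" by auto
      show ?thesis unfolding q by (rule pos_ok[OF c1 c2 c3 True[symmetric]])
    next
      case False
      then obtain q1 where q1: "?S x = Some q1" "q = neg_update q1" using h np
        by (auto simp: qs_prune_def qs_update_def)
      have "(\<forall>c\<in>set q1. 1 \<le> c) \<and> sum_list q1 \<le> n \<and>
         (\<forall>j<length q1. obs (n+1 - sum_list (take (Suc j) q1)) = x)"
        using Suc.IH q1(1) unfolding qinv_def by blast
      then have c1: "\<forall>c\<in>set q1. 1 \<le> c" and c2: "sum_list q1 \<le> n"
        and c3: "\<forall>j<length q1. obs (n+1 - sum_list (take (Suc j) q1)) = x" by auto
      show ?thesis unfolding q1(2) by (rule neg_ok[OF c1 c2 c3])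
    qed
  qed
qed

lemma sum_ge_len: "\<forall>c\<in>set q. 1 \<le> (c::nat) \<Longrightarrow> length q \<le> sum_list q"
  by (induction q) auto

lemma prefix_strict: 
  assumes "\<forall>c\<in>set q. 1 \<le> (c::nat)" "i < j" "j < length q"
  shows "sum_list (take (Suc i) q) < sum_list (take (Suc j) q)"
proof -
  have e: "Suc j = Suc i + (j - i)" using assms(2) by simp
  have "take (Suc j) q = take (Suc i) q @ (take (j - i) (drop (Suc i) q))"
    by (subst e, rule take_add)
  moreover have "take (j - i) (drop (Suc i) q) \<noteq> []" using assms by auto
  moreover have "\<forall>c\<in>set (take (j - i) (drop (Suc i) q)). 1 \<le> c"
    using assms(1) by (meson in_set_dropD in_set_takeD)
  ultimately show ?thesis
  proof -
    assume a1: "take (Suc j) q = take (Suc i) q @ (take (j - i) (drop (Suc i) q))"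
      and a2: "take (j - i) (drop (Suc i) q) \<noteq> []"
      and a3: "\<forall>c\<in>set (take (j - i) (drop (Suc i) q)). 1 \<le> c"
    have "0 < length (take (j - i) (drop (Suc i) q))" using a2 by simp
    also have "\<dots> \<le> sum_list (take (j - i) (drop (Suc i) q))" using a3 by (rule sum_ge_len)
    finally show ?thesis unfolding a1 by simp
  qed
qed

lemma ages:
  fixes q :: "nat list" and x :: 'a
  assumes c1: "\<forall>c\<in>set q. 1 \<le> c"
    and ob: "\<forall>j<length q. obs (n + 1 - sum_list (take (Suc j) q)) = x"
    and len: "length q = a" and a2: "a \<ge> 2" and k1: "k > 1"
    and est: "(real a - 1) / (real (sum_list q) - 1) > 1 / real k"
  shows "a - 1 \<le> card {d \<in> {1..k*(a-1) - 1}. obs (n + 1 - d) = x}"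
proof -
  have sl: "a \<le> sum_list q" using sum_ge_len[OF c1] len by simp
  have D: "real (sum_list q) - 1 > 0" using sl a2 by simp
  have kp: "real k > 0" using k1 by simp
  have "1 / real k * (real (sum_list q) - 1) < (real a - 1)"
    using est D by (metis less_divide_eq times_divide_eq_left)
  then have "real (sum_list q) - 1 < real k * (real a - 1)"
    using kp by (simp add: field_simps)
  then have "real (sum_list q) < real (k * (a - 1)) + 1" using a2 by (simp add: of_nat_diff)
  then have sq: "sum_list q \<le> k * (a - 1)" by linarith
  define f where "f j = sum_list (take (Suc j) q)" for j
  have fsum: "f (a - 1) = sum_list q" unfolding f_def using len a2 by simp
  have fin: "f ` {..<a-1} \<subseteq> {d \<in> {1..k*(a-1) - 1}. obs (n + 1 - d) = x}"
  proof
    fix d assume "d \<in> f ` {..<a-1}"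
    then obtain j where j: "j < a - 1" "d = f j" by auto
    have "f j < f (a - 1)" unfolding f_def using prefix_strict[OF c1, of j "a-1"] j len a2 by simp
    then have u: "d \<le> k*(a-1) - 1" using fsum sq j by simp
    have "take (Suc j) q \<noteq> []" using j len a2 by auto
    moreover have "\<forall>c\<in>set (take (Suc j) q). 1 \<le> c" using c1 by (meson in_set_takeD)
    ultimately have "1 \<le> f j" unfolding f_def
      by (metis One_nat_def Suc_leI le_trans length_greater_0_conv sum_ge_len)
    moreover have "obs (n + 1 - d) = x" using ob j len unfolding f_def by simp
    ultimately show "d \<in> {d \<in> {1..k*(a-1) - 1}. obs (n + 1 - d) = x}" using u j by simp
  qed
  have inj: "inj_on f {..<a-1}"
  proof (rule inj_onI)
    fix i j assume ij: "i \<in> {..<a-1}" "j \<in> {..<a-1}" "f i = f j"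
    show "i = j"
    proof (rule ccontr)
      assume "i \<noteq> j"
      then consider "i < j" | "j < i" by linarith
      then show False
      proof cases
        case 1
        have "j < length q" using ij(2) len by simp
        then show False using prefix_strict[OF c1 1] ij(3) unfolding f_def by simp
      next
        case 2
        have "i < length q" using ij(1) len by simp
        then show False using prefix_strict[OF c1 2] ij(3) unfolding f_def by simp
      qed
    qed
  qed
  have "a - 1 = card (f ` {..<a-1})" using card_image[OF inj] by simp
  also have "\<dots> \<le> card {d \<in> {1..k*(a-1) - 1}. obs (n + 1 - d) = x}"
    by (rule card_mono[OF _ fin]) simp
  finally show ?thesis .
qed

theorem lemma14:
  fixes a :: nat and obs :: "nat \<Rightarrow> 'a" and prn :: "nat \<Rightarrow> 'a set"
    and t :: nat and k :: nat
  assumes "a \<ge> 2" and "t \<ge> 1" and "k > 1"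
  shows "N_count (Q_at a obs prn t) (1 / real k) \<le> k - 1"
proof -
  define n where "n = t - 1"
  define S where "S = qs_state a obs prn n"
  define m where "m = k * (a - 1) - 1"
  define G where "G = {i. Q_at a obs prn t i > 1 / real k}"
  define A where "A x = {d \<in> {1..m}. obs (n + 1 - d) = x}" for x
  have inv: "qinv obs n S" unfolding S_def by (rule inv_state)
  have cardA: "a - 1 \<le> card (A x)" if "x \<in> G" for x
  proof -
    have "uniform_estimate a S x > 1 / real k" using that unfolding G_def Q_at_def S_def n_def by simp
    moreover have "0 < 1 / real k" using assms(3) by simp
    ultimately obtain q where q: "S x = Some q" "length q = a"
        "(real a - 1) / (real (sum_list q) - 1) > 1 / real k"
      unfolding uniform_estimate_def
      by (cases "S x"; cases "length (the (S x)) = a") auto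
    have c1: "\<forall>c\<in>set q. 1 \<le> c" and c3: "\<forall>j<length q. obs (n + 1 - sum_list (take (Suc j) q)) = x"
      using inv q(1) unfolding qinv_def by blast+
    show ?thesis unfolding A_def m_def by (rule ages[OF c1 c3 q(2) assms(1) assms(3) q(3)])
  qed
  have GA: "G \<subseteq> (\<lambda>d. obs (n + 1 - d)) ` {1..m}"
  proof
    fix x assume x: "x \<in> G"
    then have "card (A x) > 0" using cardA[OF x] assms(1) by linarith
    then obtain d where "d \<in> A x" by (metis card.empty ex_in_conv less_irrefl)
    then show "x \<in> (\<lambda>d. obs (n + 1 - d)) ` {1..m}" unfolding A_def by auto
  qed
  have finG: "finite G" using GA finite_subset by blast
  have "card G * (a - 1) = (\<Sum>x\<in>G. (a - 1))" by simp
  also have "\<dots> \<le> (\<Sum>x\<in>G. card (A x))" using cardA by (rule sum_mono)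
  also have "\<dots> = card (\<Union>x\<in>G. A x)"
    by (rule card_UN_disjoint[symmetric]) (auto simp: finG A_def)
  also have "\<dots> \<le> card {1..m}" by (rule card_mono) (auto simp: A_def)
  also have "\<dots> = m" by simp
  finally have "card G * (a - 1) \<le> k * (a - 1) - 1" unfolding m_def .
  moreover have "k * (a - 1) > 0" using assms(1) assms(3) by simp
  ultimately have "card G * (a - 1) < k * (a - 1)" by linarith
  then have "card G < k" by simp
  then show ?thesis unfolding N_count_def G_def[symmetric] by simp
qed

end
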